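(* Consider the system on $\mathbb{R}^2$ $$\dot x=f(x)=\begin{bmatrix}-x_1^3+x_1^5x_2\\ -x_2^3-x_1^6\end{bmatrix}$$ and the quadratic candidate $V(x)=c_0x_1^2+c_1x_2^2+c_2x_1x_2$ with real coefficients $c_0,c_1,c_2$, with Lie derivative $\dot V(x)=\nabla V(x)\cdot f(x)$. Let $\mu>0$ and let $\{y_j\}_{j=1}^N\subset\mathbb{R}^2\setminus\{0\}$ be any finite set of sample points. Then there exist $c_0,c_1,c_2$ with $c_0\ne c_1$ such that $V$ satisfies both (a) $V(y_j)>0$ and $\dot V(y_j)<0$ for all $j=1,\dots,N$; and (b) $V(y_j)\ge \mu\min(|y_j|^{l_V},|y_j|^{k_V})$ and $\dot V(y_j)\le -\mu\min(|y_j|^{l_{\dot V}},|y_j|^{k_{\dot V}})$ for all $j=1,\dots,N$, where $l_V,k_V$ (resp. $l_{\dot V},k_{\dot V}$) denote the lowest and highest total degrees of the monomials with nonzero coefficient in $V$ (resp. $\dot V$), and $|\cdot|$ is the Euclidean norm.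
   Context: Total degree of the monomial $x_1^{a}x_2^{b}$ is $a+b$. Note that $\dot V(x)=(2c_0-2c_1)x_1^6x_2-c_2x_1^7+c_2x_1^5x_2^2-2c_0x_1^4-2c_1x_2^4-c_2x_1^3x_2-c_2x_1x_2^3$. *)

theory Defs
  imports "HOL-Analysis.Analysis"
begin

text \<open>Points of R^2 are pairs (x1, x2) :: real \<times> real; the norm on real \<times> real
  is the Euclidean norm sqrt (x1^2 + x2^2).\<close>

definition f1 :: "real \<times> real \<Rightarrow> real" where
  "f1 x = - ((fst x)^3) + (fst x)^5 * snd x"
definition f2 :: "real \<times> real \<Rightarrow> real" where
  "f2 x = - ((snd x)^3) - (fst x)^6"

definition V :: "real \<Rightarrow> real \<Rightarrow> real \<Rightarrow> real \<times> real \<Rightarrow> real" where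
  "V c0 c1 c2 x = c0 * (fst x)^2 + c1 * (snd x)^2 + c2 * fst x * snd x"

text \<open>Lie derivative: grad V \<cdot> f, with dV/dx1 = 2 c0 x1 + c2 x2, dV/dx2 = 2 c1 x2 + c2 x1.\<close>
definition Vdot :: "real \<Rightarrow> real \<Rightarrow> real \<Rightarrow> real \<times> real \<Rightarrow> real" where
  "Vdot c0 c1 c2 x = (2 * c0 * fst x + c2 * snd x) * f1 x + (2 * c1 * snd x + c2 * fst x) * f2 x"

text \<open>Bivariate polynomials as coefficient maps (exponent pair (a,b) for x1^a x2^b).\<close>
definition pevl :: "(nat \<times> nat \<Rightarrow> real) \<Rightarrow> real \<times> real \<Rightarrow> real" where
  "pevl p x = (\<Sum>m\<in>{m. p m \<noteq> 0}. p m * (fst x) ^ fst m * (snd x) ^ snd m)"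

definition lowdeg :: "(nat \<times> nat \<Rightarrow> real) \<Rightarrow> nat" where
  "lowdeg p = Min ((\<lambda>m. fst m + snd m) ` {m. p m \<noteq> 0})"
definition highdeg :: "(nat \<times> nat \<Rightarrow> real) \<Rightarrow> nat" where
  "highdeg p = Max ((\<lambda>m. fst m + snd m) ` {m. p m \<noteq> 0})"

definition Vcoef :: "real \<Rightarrow> real \<Rightarrow> real \<Rightarrow> nat \<times> nat \<Rightarrow> real" where
  "Vcoef c0 c1 c2 m =
     (if m = (2,0) then c0 else if m = (0,2) then c1 else if m = (1,1) then c2 else 0)"

definition Vdotcoef :: "real \<Rightarrow> real \<Rightarrow> real \<Rightarrow> nat \<times> nat \<Rightarrow> real" where
  "Vdotcoef c0 c1 c2 m =
     (if m = (6,1) then 2*c0 - 2*c1 else if m = (7,0) then - c2 else if m = (5,2) then c2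
      else if m = (4,0) then - 2*c0 else if m = (0,4) then - 2*c1
      else if m = (3,1) then - c2 else if m = (1,3) then - c2 else 0)"

lemma pevl_superset:
  assumes "finite S" "{m. p m \<noteq> 0} \<subseteq> S"
  shows "pevl p x = (\<Sum>m\<in>S. p m * (fst x) ^ fst m * (snd x) ^ snd m)"
  unfolding pevl_def by (rule sum.mono_neutral_left) (use assms in auto)

lemma V_coef_ok: "V c0 c1 c2 x = pevl (Vcoef c0 c1 c2) x"
  by (subst pevl_superset[where S="{(2,0),(0,2),(1,1)}"])
     (auto simp: Vcoef_def V_def split: if_splits)

lemma Vdot_coef_ok: "Vdot c0 c1 c2 x = pevl (Vdotcoef c0 c1 c2) x"
  by (subst pevl_superset[where S="{(6,1),(7,0),(5,2),(4,0),(0,4),(3,1),(1,3)}"])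
     (auto simp: Vdotcoef_def Vdot_def f1_def f2_def algebra_simps power_def split: if_splits)

end

theory Submission
  imports Defs
begin

lemma Vset: "c0 \<noteq> 0 \<Longrightarrow> c1 \<noteq> 0 \<Longrightarrow> {m. Vcoef c0 c1 0 m \<noteq> 0} = {(2,0),(0,2)}"
  by (auto simp: Vcoef_def split: if_splits)

lemma Vdset: "c0 \<noteq> 0 \<Longrightarrow> c1 \<noteq> 0 \<Longrightarrow> c0 \<noteq> c1 \<Longrightarrow>
   {m. Vdotcoef c0 c1 0 m \<noteq> 0} = {(6,1),(4,0),(0,4)}"
  by (auto simp: Vdotcoef_def split: if_splits)

lemma Vdeg: "c0 \<noteq> 0 \<Longrightarrow> c1 \<noteq> 0 \<Longrightarrow> lowdeg (Vcoef c0 c1 0) = 2 \<and> highdeg (Vcoef c0 c1 0) = 2"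
  by (simp add: lowdeg_def highdeg_def Vset)

lemma Vddeg: "c0 \<noteq> 0 \<Longrightarrow> c1 \<noteq> 0 \<Longrightarrow> c0 \<noteq> c1 \<Longrightarrow> lowdeg (Vdotcoef c0 c1 0) = 4"
  by (simp add: lowdeg_def Vdset)

lemma norm2: "norm (y::real\<times>real) ^ 2 = (fst y)^2 + (snd y)^2"
  by (cases y) (simp add: norm_Pair)

lemma norm4: "norm (y::real\<times>real) ^ 4 \<le> 2 * ((fst y)^4 + (snd y)^4)"
proof -
  have "norm y ^ 4 = ((fst y)^2 + (snd y)^2)^2" by (metis norm2 power_mult numeral_Bit0 mult_2 power_add power2_eq_square)
  also have "\<dots> \<le> 2 * ((fst y)^4 + (snd y)^4)"
    using zero_le_square[of "(fst y)^2 - (snd y)^2"]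
    by (simp add: power2_eq_square algebra_simps power4_eq_xxxx)
  finally show ?thesis .
qed

theorem claim1:
  fixes \<mu> :: real and Y :: "(real \<times> real) set"
  assumes "\<mu> > 0" and "finite Y" and "0 \<notin> Y"
  shows "\<exists>c0 c1 c2 :: real. c0 \<noteq> c1 \<and>
    (\<forall>y\<in>Y. V c0 c1 c2 y > 0 \<and> Vdot c0 c1 c2 y < 0) \<and>
    (\<forall>y\<in>Y. V c0 c1 c2 y \<ge> \<mu> * min (norm y ^ lowdeg (Vcoef c0 c1 c2)) (norm y ^ highdeg (Vcoef c0 c1 c2))
          \<and> Vdot c0 c1 c2 y \<le> - \<mu> * min (norm y ^ lowdeg (Vdotcoef c0 c1 c2)) (norm y ^ highdeg (Vdotcoef c0 c1 c2)))"
proof -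
  define r where "r y = \<bar>(fst y)^6 * snd y\<bar> / ((fst y)^4 + (snd y)^4)" for y :: "real \<times> real"
  define S where "S = (\<Sum>y\<in>Y. r y)"
  have r0: "r y \<ge> 0" for y unfolding r_def by simp
  have S0: "S \<ge> 0" unfolding S_def using r0 by (simp add: sum_nonneg)
  have rS: "r y \<le> S" if "y \<in> Y" for y
    unfolding S_def using assms(2) that r0 by (intro member_le_sum) auto
  define e where "e = 1 / (2 * (1 + S))"
  have e0: "e > 0" unfolding e_def using S0 by simp
  define K where "K = 2 * \<mu>"
  have K0: "K > 0" using assms(1) by (simp add: K_def)
  define c0 where "c0 = K"
  define c1 where "c1 = K + K * e"
  have c0n: "c0 \<noteq> 0" and c1n: "c1 \<noteq> 0" and c01: "c0 \<noteq> c1"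
  proof -
    have "K * e > 0" using K0 e0 by (rule mult_pos_pos)
    then show "c0 \<noteq> 0" "c1 \<noteq> 0" "c0 \<noteq> c1" using K0 unfolding c0_def c1_def by linarith+
  qed
  have key: "\<forall>y\<in>Y. V c0 c1 0 y > 0 \<and> Vdot c0 c1 0 y < 0 \<and>
     V c0 c1 0 y \<ge> \<mu> * norm y ^ 2 \<and> Vdot c0 c1 0 y \<le> - \<mu> * norm y ^ 4"
  proof
    fix y assume yY: "y \<in> Y"
    obtain a b where yab: "y = (a,b)" by (cases y)
    have ab: "a \<noteq> 0 \<or> b \<noteq> 0" using assms(3) yY yab by (auto simp: zero_prod_def)
    have D: "a^4 + b^4 > 0"
    proof -
      have "a^4 \<ge> 0" "b^4 \<ge> 0" by simp_all
      moreover have "a^4 > 0 \<or> b^4 > 0" using ab by simp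
      ultimately show ?thesis by linarith
    qed
    have n2: "norm y ^ 2 = a^2 + b^2" using norm2[of y] yab by simp
    have n4: "norm y ^ 4 \<le> 2 * (a^4 + b^4)" using norm4[of y] yab by simp
    have ry: "r y * (a^4+b^4) = \<bar>a^6 * b\<bar>" using D unfolding r_def yab by simp
    have er: "e * r y \<le> 1/2"
    proof -
      have "e * r y \<le> e * S" using rS[OF yY] e0 by (simp add: mult_left_mono)
      also have "\<dots> \<le> 1/2" unfolding e_def using S0 by (simp add: field_simps)
      finally show ?thesis .
    qed
    have cross: "e * \<bar>a^6 * b\<bar> \<le> (a^4+b^4)/2"
    proof -
      have "e * \<bar>a^6 * b\<bar> = (e * r y) * (a^4+b^4)" by (simp only: ry[symmetric] mult.assoc)
      also have "\<dots> \<le> 1/2 * (a^4+b^4)" using er D by (intro mult_right_mono) auto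
      finally show ?thesis by simp
    qed
    have Vd: "Vdot c0 c1 0 y = - 2*K*(a^4 + b^4) - 2*K*e*b^4 - 2*K*e*(a^6*b)"
      unfolding Vdot_def f1_def f2_def yab c0_def c1_def by (simp add: algebra_simps power_def)
    have Vv: "V c0 c1 0 y = K*(a^2+b^2) + K*e*b^2"
      unfolding V_def yab c0_def c1_def by (simp add: algebra_simps)
    have t1: "K*e*b^2 \<ge> 0" using K0 e0 by simp
    have t2: "K*e*b^4 \<ge> 0" using K0 e0 by simp
    have t3: "- (K*e*(a^6*b)) \<le> K * ((a^4+b^4)/2)"
    proof -
      have "- (e*(a^6*b)) \<le> e * \<bar>a^6*b\<bar>" using e0 by (simp add: abs_if)
      then have "- (e*(a^6*b)) \<le> (a^4+b^4)/2" using cross by linarith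
      then show ?thesis using K0 by (metis minus_mult_right mult.assoc mult_left_mono less_imp_le)
    qed
    have Vdle: "Vdot c0 c1 0 y \<le> - K*(a^4+b^4)" using Vd t2 t3 by (simp add: algebra_simps)
    have ab2: "a^2+b^2 > 0" using ab by (simp add: add_pos_nonneg add_nonneg_pos sum_power2_gt_zero_iff)
    show "V c0 c1 0 y > 0 \<and> Vdot c0 c1 0 y < 0 \<and>
     V c0 c1 0 y \<ge> \<mu> * norm y ^ 2 \<and> Vdot c0 c1 0 y \<le> - \<mu> * norm y ^ 4"
    proof (intro conjI)
      have "K*(a^2+b^2) > 0" using K0 ab2 by (rule mult_pos_pos)
      then show "V c0 c1 0 y > 0" using Vv t1 by linarith
      have "K*(a^4+b^4) > 0" using K0 D by (rule mult_pos_pos)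
      then show "Vdot c0 c1 0 y < 0" using Vdle by linarith
      have "\<mu> * norm y ^ 2 \<le> K*(a^2+b^2)" using n2 ab2 assms(1) unfolding K_def by simp
      then show "V c0 c1 0 y \<ge> \<mu> * norm y ^ 2" using Vv t1 by linarith
      have "\<mu> * norm y ^ 4 \<le> \<mu> * (2 * (a^4+b^4))" using n4 assms(1) by (intro mult_left_mono) auto
      then show "Vdot c0 c1 0 y \<le> - \<mu> * norm y ^ 4" using Vdle unfolding K_def by linarith
    qed
  qed
  show ?thesis
  proof (intro exI conjI ballI)
    show "c0 \<noteq> c1" by fact
    fix y assume yY: "y \<in> Y"
    note k = key[rule_format, OF yY]
    show "V c0 c1 0 y > 0" "Vdot c0 c1 0 y < 0" using k by auto
    show "V c0 c1 0 y \<ge> \<mu> * min (norm y ^ lowdeg (Vcoef c0 c1 0)) (norm y ^ highdeg (Vcoef c0 c1 0))"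
      using k Vdeg[OF c0n c1n] by simp
    have "min (norm y ^ lowdeg (Vdotcoef c0 c1 0)) (norm y ^ highdeg (Vdotcoef c0 c1 0)) \<le> norm y ^ 4"
      using Vddeg[OF c0n c1n c01] by simp
    then show "Vdot c0 c1 0 y \<le> - \<mu> * min (norm y ^ lowdeg (Vdotcoef c0 c1 0)) (norm y ^ highdeg (Vdotcoef c0 c1 0))"
    proof -
      have "\<mu> * min (norm y ^ lowdeg (Vdotcoef c0 c1 0)) (norm y ^ highdeg (Vdotcoef c0 c1 0)) \<le> \<mu> * norm y ^ 4"
        using \<open>min _ _ \<le> _\<close> assms(1) by (intro mult_left_mono) auto
      then show ?thesis using k by linarith
    qed
  qed
qed

end
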